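(* Let $(X,u)$ and $(Y,v)$ be Čech closure spaces, let $Y^X$ be the set of all continuous maps $(X,u)\to(Y,v)$, and let $\sigma$ be a Čech closure operator on $Y^X$. Then: (1) $\sigma$ is proper if and only if for every topological space $Z$ having at most one non-isolated point and every continuous $g:Z\times(X,u)\to(Y,v)$, the map $g^*:Z\to(Y^X,\sigma)$ is continuous; (2) $\sigma$ is admissible if and only if for every topological space $Z$ having at most one non-isolated point and every $g:Z\times X\to Y$ with $g^*(Z)\subset Y^X$ such that $g^*:Z\to(Y^X,\sigma)$ is continuous, the map $g:Z\times(X,u)\to(Y,v)$ is continuous.
   Context: A Čech closure space $(X,u)$ is a set $X$ with an operator $u:\mathcal P(X)\to\mathcal P(X)$ satisfying $u(\emptyset)=\emptyset$, $A\subset u(A)$, and $u(A\cup B)=u(A)\cup u(B)$. The interior is $\mathrm{int}_u A=X\setminus u(X\setminus A)$; $U$ is a neighbourhood of $x$ if $x\in\mathrm{int}_uU$. Topological spaces are regarded as closure spaces via their Kuratowski closure. A map $f:(X,u)\to(Y,v)$ is continuous if $f(u(A))\subset v(f(A))$ for all $A$. The product $(Z,w)\times(X,u)$ is $Z\times X$ with the closure operator for which the sets $W\times U$ ($W$ a neighbourhood of $z$, $U$ of $x$) form a neighbourhood base at $(z,x)$. For $g:Z\times X\to Y$, $g^*(z)(x)=g(z,x)$. A closure operator $\sigma$ on $Y^X$ is proper if for every closure space $(Z,w)$, continuity of $g:(Z,w)\times(X,u)\to(Y,v)$ implies continuity of $g^*:(Z,w)\to(Y^X,\sigma)$; it is admissible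 if for every closure space $(Z,w)$ and every $g:Z\times X\to Y$ with $g^*(Z)\subset Y^X$, continuity of $g^*:(Z,w)\to(Y^X,\sigma)$ implies continuity of $g$. *)

theory Defs
  imports "HOL-Analysis.Analysis" "HOL-Library.FuncSet"
begin

definition cech_closure :: "'a set \<Rightarrow> ('a set \<Rightarrow> 'a set) \<Rightarrow> bool" where
  "cech_closure S u \<longleftrightarrow>
     u {} = {} \<and>
     (\<forall>A. A \<subseteq> S \<longrightarrow> A \<subseteq> u A \<and> u A \<subseteq> S) \<and>
     (\<forall>A B. A \<subseteq> S \<longrightarrow> B \<subseteq> S \<longrightarrow> u (A \<union> B) = u A \<union> u B)"

definition cl_interior :: "'a set \<Rightarrow> ('a set \<Rightarrow> 'a set) \<Rightarrow> 'a set \<Rightarrow> 'a set" where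
  "cl_interior S u A = S - u (S - A)"

definition cl_nbhd :: "'a set \<Rightarrow> ('a set \<Rightarrow> 'a set) \<Rightarrow> 'a \<Rightarrow> 'a set \<Rightarrow> bool" where
  "cl_nbhd S u x U \<longleftrightarrow> U \<subseteq> S \<and> x \<in> cl_interior S u U"

definition cl_cont :: "'a set \<Rightarrow> ('a set \<Rightarrow> 'a set) \<Rightarrow> 'b set \<Rightarrow> ('b set \<Rightarrow> 'b set) \<Rightarrow> ('a \<Rightarrow> 'b) \<Rightarrow> bool" where
  "cl_cont S u T v f \<longleftrightarrow> f ` S \<subseteq> T \<and> (\<forall>A. A \<subseteq> S \<longrightarrow> f ` (u A) \<subseteq> v (f ` A))"

text \<open>Product closure: the closure operator on Z \<times> X for which the sets W \<times> U
  (W a neighbourhood of z, U a neighbourhood of x) form a neighbourhood base at (z,x).\<close>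
definition prod_cl :: "'z set \<Rightarrow> ('z set \<Rightarrow> 'z set) \<Rightarrow> 'x set \<Rightarrow> ('x set \<Rightarrow> 'x set)
    \<Rightarrow> ('z \<times> 'x) set \<Rightarrow> ('z \<times> 'x) set" where
  "prod_cl Z w X u A = {(z, x). z \<in> Z \<and> x \<in> X \<and>
      (\<forall>W U. cl_nbhd Z w z W \<longrightarrow> cl_nbhd X u x U \<longrightarrow> (W \<times> U) \<inter> A \<noteq> {})}"

text \<open>Y^X: the set of continuous maps (X,u) \<rightarrow> (Y,v), represented extensionally
  (value undefined outside X).\<close>
definition cont_maps :: "'x set \<Rightarrow> ('x set \<Rightarrow> 'x set) \<Rightarrow> 'y set \<Rightarrow> ('y set \<Rightarrow> 'y set) \<Rightarrow> ('x \<Rightarrow> 'y) set" where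
  "cont_maps X u Y v = {f. f \<in> extensional X \<and> cl_cont X u Y v f}"

definition gstar :: "'x set \<Rightarrow> ('z \<times> 'x \<Rightarrow> 'y) \<Rightarrow> 'z \<Rightarrow> ('x \<Rightarrow> 'y)" where
  "gstar X g z = restrict (\<lambda>x. g (z, x)) X"

text \<open>Properness and admissibility; the closure spaces (Z,w) range over carriers in the type 'z.\<close>
definition proper :: "'z itself \<Rightarrow> 'x set \<Rightarrow> ('x set \<Rightarrow> 'x set) \<Rightarrow> 'y set \<Rightarrow> ('y set \<Rightarrow> 'y set)
    \<Rightarrow> (('x \<Rightarrow> 'y) set \<Rightarrow> ('x \<Rightarrow> 'y) set) \<Rightarrow> bool" where
  "proper _ X u Y v \<sigma> \<longleftrightarrow>
    (\<forall>(Z::'z set) w (g::'z \<times> 'x \<Rightarrow> 'y). cech_closure Z w \<longrightarrow>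
       cl_cont (Z \<times> X) (prod_cl Z w X u) Y v g \<longrightarrow>
       cl_cont Z w (cont_maps X u Y v) \<sigma> (gstar X g))"

definition admissible :: "'z itself \<Rightarrow> 'x set \<Rightarrow> ('x set \<Rightarrow> 'x set) \<Rightarrow> 'y set \<Rightarrow> ('y set \<Rightarrow> 'y set)
    \<Rightarrow> (('x \<Rightarrow> 'y) set \<Rightarrow> ('x \<Rightarrow> 'y) set) \<Rightarrow> bool" where
  "admissible _ X u Y v \<sigma> \<longleftrightarrow>
    (\<forall>(Z::'z set) w (g::'z \<times> 'x \<Rightarrow> 'y). cech_closure Z w \<longrightarrow>
       gstar X g ` Z \<subseteq> cont_maps X u Y v \<longrightarrow>
       cl_cont Z w (cont_maps X u Y v) \<sigma> (gstar X g) \<longrightarrow>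
       cl_cont (Z \<times> X) (prod_cl Z w X u) Y v g)"

definition at_most_one_nonisolated :: "'z topology \<Rightarrow> bool" where
  "at_most_one_nonisolated Z \<longleftrightarrow>
    (\<forall>a\<in>topspace Z. \<forall>b\<in>topspace Z. \<not> openin Z {a} \<longrightarrow> \<not> openin Z {b} \<longrightarrow> a = b)"

text \<open>The test conditions of Corollary 3, with Z a topological space regarded as the
  closure space (topspace Z, closure_of Z).\<close>
definition proper_test :: "'z itself \<Rightarrow> 'x set \<Rightarrow> ('x set \<Rightarrow> 'x set) \<Rightarrow> 'y set \<Rightarrow> ('y set \<Rightarrow> 'y set)
    \<Rightarrow> (('x \<Rightarrow> 'y) set \<Rightarrow> ('x \<Rightarrow> 'y) set) \<Rightarrow> bool" where
  "proper_test _ X u Y v \<sigma> \<longleftrightarrow>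
    (\<forall>(Z::'z topology) (g::'z \<times> 'x \<Rightarrow> 'y). at_most_one_nonisolated Z \<longrightarrow>
       cl_cont (topspace Z \<times> X) (prod_cl (topspace Z) ((closure_of) Z) X u) Y v g \<longrightarrow>
       cl_cont (topspace Z) ((closure_of) Z) (cont_maps X u Y v) \<sigma> (gstar X g))"

definition admissible_test :: "'z itself \<Rightarrow> 'x set \<Rightarrow> ('x set \<Rightarrow> 'x set) \<Rightarrow> 'y set \<Rightarrow> ('y set \<Rightarrow> 'y set)
    \<Rightarrow> (('x \<Rightarrow> 'y) set \<Rightarrow> ('x \<Rightarrow> 'y) set) \<Rightarrow> bool" where
  "admissible_test _ X u Y v \<sigma> \<longleftrightarrow>
    (\<forall>(Z::'z topology) (g::'z \<times> 'x \<Rightarrow> 'y). at_most_one_nonisolated Z \<longrightarrow>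
       gstar X g ` topspace Z \<subseteq> cont_maps X u Y v \<longrightarrow>
       cl_cont (topspace Z) ((closure_of) Z) (cont_maps X u Y v) \<sigma> (gstar X g) \<longrightarrow>
       cl_cont (topspace Z \<times> X) (prod_cl (topspace Z) ((closure_of) Z) X u) Y v g)"

end

theory Submission imports Defs begin

lemma cech_mono: "cech_closure S u \<Longrightarrow> A \<subseteq> B \<Longrightarrow> B \<subseteq> S \<Longrightarrow> u A \<subseteq> u B"
  unfolding cech_closure_def by (metis Un_absorb1 Un_upper1 order_trans)

lemma cech_ext: "cech_closure S u \<Longrightarrow> A \<subseteq> S \<Longrightarrow> A \<subseteq> u A"
  unfolding cech_closure_def by blast

lemma cech_sub: "cech_closure S u \<Longrightarrow> A \<subseteq> S \<Longrightarrow> u A \<subseteq> S"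
  unfolding cech_closure_def by blast

lemma nbhd_mem: "cech_closure S u \<Longrightarrow> cl_nbhd S u x U \<Longrightarrow> x \<in> U"
  unfolding cl_nbhd_def cl_interior_def using cech_ext[of S u "S - U"] by blast

lemma nbhd_top: "cech_closure S u \<Longrightarrow> x \<in> S \<Longrightarrow> cl_nbhd S u x S"
  unfolding cl_nbhd_def cl_interior_def cech_closure_def by simp

lemma cech_Un: "cech_closure S u \<Longrightarrow> A \<subseteq> S \<Longrightarrow> B \<subseteq> S \<Longrightarrow> u (A \<union> B) = u A \<union> u B"
  unfolding cech_closure_def by blast

lemma nbhd_Int: "cech_closure S u \<Longrightarrow> cl_nbhd S u x U \<Longrightarrow> cl_nbhd S u x V \<Longrightarrow> cl_nbhd S u x (U \<inter> V)"
proof -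
  assume c: "cech_closure S u" and "cl_nbhd S u x U" "cl_nbhd S u x V"
  moreover have "S - (U \<inter> V) = (S - U) \<union> (S - V)" by blast
  moreover have "u ((S - U) \<union> (S - V)) = u (S - U) \<union> u (S - V)"
    using cech_Un[OF c Diff_subset Diff_subset] .
  ultimately show ?thesis unfolding cl_nbhd_def cl_interior_def by auto
qed

lemma nbhd_meets: "cech_closure S u \<Longrightarrow> A \<subseteq> S \<Longrightarrow> x \<in> u A \<Longrightarrow> cl_nbhd S u x U \<Longrightarrow> U \<inter> A \<noteq> {}"
proof
  assume c: "cech_closure S u" and A: "A \<subseteq> S" "x \<in> u A" "cl_nbhd S u x U" "U \<inter> A = {}"
  then have "A \<subseteq> S - U" by blast
  then have "u A \<subseteq> u (S - U)" using cech_mono[OF c] by blast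
  then show False using A unfolding cl_nbhd_def cl_interior_def by blast
qed

lemma nbhd_compl: "A \<subseteq> S \<Longrightarrow> x \<in> S \<Longrightarrow> x \<notin> u A \<Longrightarrow> cl_nbhd S u x (S - A)"
  unfolding cl_nbhd_def cl_interior_def by (simp add: Diff_Diff_Int inf.absorb2)

lemma cech_top: "cech_closure (topspace T) ((closure_of) T)"
  unfolding cech_closure_def by (auto simp: closure_of_subset closure_of_subset_topspace)

lemma top_nbhd: "cl_nbhd (topspace T) ((closure_of) T) p N \<longleftrightarrow>
   N \<subseteq> topspace T \<and> (\<exists>V. openin T V \<and> p \<in> V \<and> V \<subseteq> N)"
proof
  assume a: "cl_nbhd (topspace T) ((closure_of) T) p N"
  then have N: "N \<subseteq> topspace T" and p: "p \<in> topspace T" "p \<notin> T closure_of (topspace T - N)"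
    unfolding cl_nbhd_def cl_interior_def by auto
  then obtain V where "p \<in> V" "openin T V" "\<forall>y. y \<in> topspace T - N \<longrightarrow> y \<notin> V"
    unfolding in_closure_of by blast
  moreover have "V \<subseteq> topspace T" using openin_subset[OF \<open>openin T V\<close>] .
  ultimately show "N \<subseteq> topspace T \<and> (\<exists>V. openin T V \<and> p \<in> V \<and> V \<subseteq> N)" using N by blast
next
  assume "N \<subseteq> topspace T \<and> (\<exists>V. openin T V \<and> p \<in> V \<and> V \<subseteq> N)"
  then obtain V where V: "N \<subseteq> topspace T" "openin T V" "p \<in> V" "V \<subseteq> N" by blast
  then have "p \<in> topspace T" using openin_subset by blast
  moreover have "p \<notin> T closure_of (topspace T - N)"
    unfolding in_closure_of using V by blast
  ultimately show "cl_nbhd (topspace T) ((closure_of) T) p N"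
    unfolding cl_nbhd_def cl_interior_def using V by blast
qed

lemma prod_cl_iff: "(z, x) \<in> prod_cl Z w X u A \<longleftrightarrow> z \<in> Z \<and> x \<in> X \<and>
      (\<forall>W U. cl_nbhd Z w z W \<longrightarrow> cl_nbhd X u x U \<longrightarrow> (W \<times> U) \<inter> A \<noteq> {})"
  by (simp add: prod_cl_def)

definition tsp :: "'z set \<Rightarrow> ('z set \<Rightarrow> 'z set) \<Rightarrow> 'z \<Rightarrow> 'z set \<Rightarrow> ('z \<Rightarrow> 'f) \<Rightarrow> 'f option set" where
  "tsp Z w z A h = insert None (Some ` h ` A)"

definition topen :: "'z set \<Rightarrow> ('z set \<Rightarrow> 'z set) \<Rightarrow> 'z \<Rightarrow> 'z set \<Rightarrow> ('z \<Rightarrow> 'f) \<Rightarrow> 'f option set \<Rightarrow> bool" where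
  "topen Z w z A h S \<longleftrightarrow> S \<subseteq> tsp Z w z A h \<and>
     (None \<in> S \<longrightarrow> (\<exists>W. cl_nbhd Z w z W \<and> Some ` h ` (A \<inter> W) \<subseteq> S))"

definition ttop where "ttop Z w z A h = topology (topen Z w z A h)"

lemma istop: "cech_closure Z w \<Longrightarrow> istopology (topen Z w z A h)"
  unfolding istopology_def
proof (intro conjI allI impI)
  assume c: "cech_closure Z w"
  fix S T assume "topen Z w z A h S" "topen Z w z A h T"
  then show "topen Z w z A h (S \<inter> T)" unfolding topen_def
  proof (intro conjI impI)
    assume S: "S \<subseteq> tsp Z w z A h \<and> (None \<in> S \<longrightarrow> (\<exists>W. cl_nbhd Z w z W \<and> Some ` h ` (A \<inter> W) \<subseteq> S))"
      and T: "T \<subseteq> tsp Z w z A h \<and> (None \<in> T \<longrightarrow> (\<exists>W. cl_nbhd Z w z W \<and> Some ` h ` (A \<inter> W) \<subseteq> T))"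
    show "S \<inter> T \<subseteq> tsp Z w z A h" using S by blast
    assume nST: "None \<in> S \<inter> T"
    have e1: "\<exists>W. cl_nbhd Z w z W \<and> Some ` h ` (A \<inter> W) \<subseteq> S"
      by (rule mp[OF conjunct2[OF S] IntD1[OF nST]])
    have e2: "\<exists>W. cl_nbhd Z w z W \<and> Some ` h ` (A \<inter> W) \<subseteq> T"
      by (rule mp[OF conjunct2[OF T] IntD2[OF nST]])
    obtain W1 where W1: "cl_nbhd Z w z W1" and W1s: "Some ` h ` (A \<inter> W1) \<subseteq> S"
      using e1 by blast
    obtain W2 where W2: "cl_nbhd Z w z W2" and W2s: "Some ` h ` (A \<inter> W2) \<subseteq> T"
      using e2 by blast
    have nI: "cl_nbhd Z w z (W1 \<inter> W2)" by (rule nbhd_Int[OF c W1 W2])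
    have a1: "Some ` h ` (A \<inter> (W1 \<inter> W2)) \<subseteq> Some ` h ` (A \<inter> W1)"
      by (intro image_mono) blast
    have a2: "Some ` h ` (A \<inter> (W1 \<inter> W2)) \<subseteq> Some ` h ` (A \<inter> W2)"
      by (intro image_mono) blast
    have sub: "Some ` h ` (A \<inter> (W1 \<inter> W2)) \<subseteq> S \<inter> T"
      by (rule le_infI[OF order_trans[OF a1 W1s] order_trans[OF a2 W2s]])
    show "\<exists>W. cl_nbhd Z w z W \<and> Some ` h ` (A \<inter> W) \<subseteq> S \<inter> T" by (rule exI[of _ "W1 \<inter> W2"], rule conjI[OF nI sub])
  qed
next
  fix K assume "\<forall>K\<in>K. topen Z w z A h K"
  then show "topen Z w z A h (\<Union>K)" unfolding topen_def by (meson Union_iff Union_least Union_upper order_trans)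
qed

lemma openin_ttop: assumes "cech_closure Z w" shows "openin (ttop Z w z A h) = topen Z w z A h"
  unfolding ttop_def by (rule topology_inverse'[OF istop[OF assms]])

lemma topspace_ttop: "cech_closure Z w \<Longrightarrow> z \<in> Z \<Longrightarrow> topspace (ttop Z w z A h) = tsp Z w z A h"
proof -
  assume c: "cech_closure Z w" "z \<in> Z"
  have "topen Z w z A h (tsp Z w z A h)" unfolding topen_def tsp_def using nbhd_top[OF c] by blast
  moreover have "\<And>S. topen Z w z A h S \<Longrightarrow> S \<subseteq> tsp Z w z A h" unfolding topen_def by blast
  ultimately show ?thesis unfolding topspace_def openin_ttop[OF c(1)] by blast
qed

lemma open_Some: "cech_closure Z w \<Longrightarrow> Some f \<in> tsp Z w z A h \<Longrightarrow> openin (ttop Z w z A h) {Some f}"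
  unfolding openin_ttop topen_def by simp

lemma open_None: "cech_closure Z w \<Longrightarrow> cl_nbhd Z w z W \<Longrightarrow>
   openin (ttop Z w z A h) (insert None (Some ` h ` (A \<inter> W)))"
  unfolding openin_ttop topen_def tsp_def by blast

lemma nonisol: "cech_closure Z w \<Longrightarrow> z \<in> Z \<Longrightarrow> at_most_one_nonisolated (ttop Z w z A h)"
  unfolding at_most_one_nonisolated_def
  by (metis open_Some option.exhaust topspace_ttop)


lemma gstar_apply: "x \<in> X \<Longrightarrow> gstar X g a x = g (a, x)"
  by (simp add: gstar_def)

lemma gstar_in:
  assumes cZ: "cech_closure Z w" and cX: "cech_closure X u"
    and g: "cl_cont (Z \<times> X) (prod_cl Z w X u) Y v g" and a: "a \<in> Z"
  shows "gstar X g a \<in> cont_maps X u Y v"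
  unfolding cont_maps_def cl_cont_def
proof (intro CollectI conjI allI impI)
  show "gstar X g a \<in> extensional X" by (simp add: gstar_def)
  show "gstar X g a ` X \<subseteq> Y" using g a unfolding cl_cont_def by (auto simp: gstar_def)
  fix B assume B: "B \<subseteq> X"
  show "gstar X g a ` u B \<subseteq> v (gstar X g a ` B)"
  proof
    fix y assume "y \<in> gstar X g a ` u B"
    then obtain x where x: "x \<in> u B" "y = gstar X g a x" by blast
    have xX: "x \<in> X" using cech_sub[OF cX B] x by blast
    have "(a, x) \<in> prod_cl Z w X u ({a} \<times> B)"
      unfolding prod_cl_iff
    proof (intro conjI allI impI)
      fix W U assume W: "cl_nbhd Z w a W" and U: "cl_nbhd X u x U"
      have "a \<in> W" using nbhd_mem[OF cZ W] .
      moreover have "U \<inter> B \<noteq> {}" using nbhd_meets[OF cX B x(1) U] .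
      ultimately show "W \<times> U \<inter> {a} \<times> B \<noteq> {}" by blast
    qed (use a xX in auto)
    moreover have "{a} \<times> B \<subseteq> Z \<times> X" using a B by blast
    ultimately have "g (a, x) \<in> v (g ` ({a} \<times> B))" using g unfolding cl_cont_def by blast
    moreover have "g ` ({a} \<times> B) = gstar X g a ` B" using B by (force simp: gstar_apply)
    ultimately show "y \<in> v (gstar X g a ` B)" using x gstar_apply[OF xX, of g a] by simp
  qed
qed

lemma ext_restrict: "f \<in> extensional X \<Longrightarrow> restrict f X = f"
  by (simp add: extensional_restrict)

lemma proper_dir:
  fixes X :: "'x set" and u :: "'x set \<Rightarrow> 'x set"
    and Y :: "'y set" and v :: "'y set \<Rightarrow> 'y set"
    and \<sigma> :: "('x \<Rightarrow> 'y) set \<Rightarrow> ('x \<Rightarrow> 'y) set"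
  assumes cX: "cech_closure X u" and cY: "cech_closure Y v"
    and cS: "cech_closure (cont_maps X u Y v) \<sigma>"
    and PT: "proper_test TYPE(('x \<Rightarrow> 'y) option) X u Y v \<sigma>"
  shows "proper TYPE('z) X u Y v \<sigma>"
  unfolding proper_def
proof (intro allI impI)
  fix Z :: "'z set" and w g
  assume cZ: "cech_closure Z w" and g: "cl_cont (Z \<times> X) (prod_cl Z w X u) Y v g"
  define h where "h = gstar X g"
  have hin: "\<And>a. a \<in> Z \<Longrightarrow> h a \<in> cont_maps X u Y v" unfolding h_def using gstar_in[OF cZ cX g] .
  show "cl_cont Z w (cont_maps X u Y v) \<sigma> (gstar X g)"
    unfolding cl_cont_def
  proof (intro conjI allI impI)
    show "gstar X g ` Z \<subseteq> cont_maps X u Y v" using hin h_def by blast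
    fix A assume AZ: "A \<subseteq> Z"
    show "gstar X g ` w A \<subseteq> \<sigma> (gstar X g ` A)"
    proof
      fix f assume "f \<in> gstar X g ` w A"
      then obtain z where zA: "z \<in> w A" and f: "f = h z" unfolding h_def by blast
      have zZ: "z \<in> Z" using cech_sub[OF cZ AZ] zA by blast
      define Tp where "Tp = ttop Z w z A h"
      have tsT: "topspace Tp = tsp Z w z A h" unfolding Tp_def using topspace_ttop[OF cZ zZ] .
      define g' where "g' = (\<lambda>(p, x). case p of None \<Rightarrow> g (z, x) | Some f \<Rightarrow> f x)"
      have hS: "\<And>f. Some f \<in> tsp Z w z A h \<Longrightarrow> f \<in> cont_maps X u Y v"
        unfolding tsp_def using AZ hin by blast
      have cont': "cl_cont (topspace Tp \<times> X) (prod_cl (topspace Tp) ((closure_of) Tp) X u) Y v g'"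
        unfolding cl_cont_def
      proof (intro conjI allI impI)
        show "g' ` (topspace Tp \<times> X) \<subseteq> Y"
        proof clarify
          fix p x assume p: "p \<in> topspace Tp" and x: "x \<in> X"
          show "g' (p, x) \<in> Y"
          proof (cases p)
            case None then show ?thesis using g zZ x unfolding g'_def cl_cont_def by auto
          next
            case (Some f)
            then have "f \<in> cont_maps X u Y v" using hS p tsT by simp
            then show ?thesis using Some x unfolding g'_def cont_maps_def cl_cont_def by auto
          qed
        qed
        fix B assume B: "B \<subseteq> topspace Tp \<times> X"
        have gB: "g' ` B \<subseteq> Y" using B \<open>g' ` (topspace Tp \<times> X) \<subseteq> Y\<close> by blast
        show "g' ` prod_cl (topspace Tp) ((closure_of) Tp) X u B \<subseteq> v (g' ` B)"
        proof clarify
          fix p x assume px: "(p, x) \<in> prod_cl (topspace Tp) ((closure_of) Tp) X u B"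
          then have pT: "p \<in> topspace Tp" and xX: "x \<in> X"
            and nb: "\<And>W U. cl_nbhd (topspace Tp) ((closure_of) Tp) p W \<Longrightarrow> cl_nbhd X u x U \<Longrightarrow> W \<times> U \<inter> B \<noteq> {}"
            unfolding prod_cl_iff by auto
          show "g' (p, x) \<in> v (g' ` B)"
          proof (cases p)
            case (Some f)
            define Bf where "Bf = {x'. (Some f, x') \<in> B}"
            have BfX: "Bf \<subseteq> X" using B unfolding Bf_def by blast
            have fc: "f \<in> cont_maps X u Y v" using hS pT tsT Some by simp
            have "x \<in> u Bf"
            proof (rule ccontr)
              assume "x \<notin> u Bf"
              then have U: "cl_nbhd X u x (X - Bf)" using nbhd_compl[OF BfX xX] by blast
              have "openin Tp {Some f}" unfolding Tp_def using open_Some[OF cZ] pT tsT Some by simp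
              then have "cl_nbhd (topspace Tp) ((closure_of) Tp) p {Some f}"
                unfolding top_nbhd using Some pT by blast
              from nb[OF this U] show False unfolding Bf_def by blast
            qed
            then have "f x \<in> v (f ` Bf)" using fc BfX unfolding cont_maps_def cl_cont_def by blast
            moreover have "f ` Bf \<subseteq> g' ` B" unfolding Bf_def g'_def by force
            then have "v (f ` Bf) \<subseteq> v (g' ` B)" by (rule cech_mono[OF cY _ gB])
            moreover have "g' (p, x) = f x" by (simp add: g'_def Some)
            ultimately show ?thesis by (metis subsetD)
          next
            case None
            define B' where "B' = {(a, x'). a \<in> A \<and> (Some (h a), x') \<in> B} \<union> {(z, x') |x'. (None, x') \<in> B}"
            have B'sub: "B' \<subseteq> Z \<times> X" unfolding B'_def using AZ zZ B by blast
            have "(z, x) \<in> prod_cl Z w X u B'"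
              unfolding prod_cl_iff
            proof (intro conjI allI impI)
              fix W U assume W: "cl_nbhd Z w z W" and U: "cl_nbhd X u x U"
              have "openin Tp (insert None (Some ` h ` (A \<inter> W)))" unfolding Tp_def using open_None[OF cZ W] .
              moreover have "insert None (Some ` h ` (A \<inter> W)) \<subseteq> topspace Tp" unfolding tsT tsp_def by blast
              ultimately have "cl_nbhd (topspace Tp) ((closure_of) Tp) p (insert None (Some ` h ` (A \<inter> W)))"
                unfolding top_nbhd using None by blast
              from nb[OF this U] obtain q x' where q: "q \<in> insert None (Some ` h ` (A \<inter> W))" "x' \<in> U" "(q, x') \<in> B"
                by blast
              show "W \<times> U \<inter> B' \<noteq> {}"
              proof (cases q)
                case None
                then have "(z, x') \<in> W \<times> U \<inter> B'" using q nbhd_mem[OF cZ W] unfolding B'_def by blast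
                then show ?thesis by blast
              next
                case (Some f)
                then obtain a where "a \<in> A \<inter> W" "f = h a" using q by blast
                then have "(a, x') \<in> W \<times> U \<inter> B'" using q Some unfolding B'_def by blast
                then show ?thesis by blast
              qed
            qed (use zZ xX in auto)
            then have gz: "g (z, x) \<in> v (g ` B')" using g B'sub unfolding cl_cont_def by blast
            have gBB: "g ` B' \<subseteq> g' ` B"
            proof
              fix y assume "y \<in> g ` B'"
              then obtain q where q: "q \<in> B'" "y = g q" by blast
              obtain a x' where "q = (a, x')" by (cases q)
              with q have ax: "(a, x') \<in> B'" "y = g (a, x')" by auto
              have x'X: "x' \<in> X" using ax B'sub by blast
              show "y \<in> g' ` B"
              proof (cases "(None, x') \<in> B \<and> a = z")
                case True
                then have "g' (None, x') = y" using ax by (simp add: g'_def)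
                then show ?thesis using True by (metis rev_image_eqI)
              next
                case False
                then have "a \<in> A" "(Some (h a), x') \<in> B" using ax unfolding B'_def by auto
                moreover have "g' (Some (h a), x') = y" using ax x'X unfolding g'_def h_def by (simp add: gstar_apply)
                ultimately show ?thesis by (metis rev_image_eqI)
              qed
            qed
            have "v (g ` B') \<subseteq> v (g' ` B)" by (rule cech_mono[OF cY gBB gB])
            with gz show ?thesis by (simp add: g'_def None subset_iff)
          qed
        qed
      qed
      have "cl_cont (topspace Tp) ((closure_of) Tp) (cont_maps X u Y v) \<sigma> (gstar X g')"
        using PT[unfolded proper_test_def, rule_format, OF _ cont'] nonisol[OF cZ zZ] unfolding Tp_def by blast
      moreover have "Some ` h ` A \<subseteq> topspace Tp" unfolding tsT tsp_def by blast
      moreover have "None \<in> Tp closure_of (Some ` h ` A)"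
        unfolding in_closure_of
      proof (intro conjI allI impI)
        show "None \<in> topspace Tp" unfolding tsT tsp_def by blast
        fix V assume V: "None \<in> V \<and> openin Tp V"
        then obtain W where W: "cl_nbhd Z w z W" "Some ` h ` (A \<inter> W) \<subseteq> V"
          unfolding Tp_def openin_ttop[OF cZ] topen_def by blast
        have "W \<inter> A \<noteq> {}" using nbhd_meets[OF cZ AZ zA W(1)] .
        then show "\<exists>y. y \<in> Some ` h ` A \<and> y \<in> V" using W(2) by blast
      qed
      ultimately have "gstar X g' None \<in> \<sigma> (gstar X g' ` Some ` h ` A)"
        unfolding cl_cont_def by blast
      moreover have "gstar X g' None = h z" unfolding gstar_def g'_def h_def by simp
      moreover have "gstar X g' ` Some ` h ` A = h ` A"
      proof -
        have "\<And>a. a \<in> A \<Longrightarrow> gstar X g' (Some (h a)) = h a"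
          using hin AZ unfolding gstar_def g'_def cont_maps_def
          by (simp add: ext_restrict subset_iff)
        then show ?thesis by (simp add: image_image)
      qed
      ultimately show "f \<in> \<sigma> (gstar X g ` A)" using f h_def by simp
    qed
  qed
qed


lemma adm_dir:
  fixes X :: "'x set" and u :: "'x set \<Rightarrow> 'x set"
    and Y :: "'y set" and v :: "'y set \<Rightarrow> 'y set"
    and \<sigma> :: "('x \<Rightarrow> 'y) set \<Rightarrow> ('x \<Rightarrow> 'y) set"
  assumes cX: "cech_closure X u" and cY: "cech_closure Y v"
    and cS: "cech_closure (cont_maps X u Y v) \<sigma>"
    and AT: "admissible_test TYPE(('x \<Rightarrow> 'y) option) X u Y v \<sigma>"
  shows "admissible TYPE('z) X u Y v \<sigma>"
  unfolding admissible_def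
proof (intro allI impI)
  fix Z :: "'z set" and w g
  assume cZ: "cech_closure Z w" and gZ: "gstar X g ` Z \<subseteq> cont_maps X u Y v"
    and gc: "cl_cont Z w (cont_maps X u Y v) \<sigma> (gstar X g)"
  define h where "h = gstar X g"
  have hin: "\<And>a. a \<in> Z \<Longrightarrow> h a \<in> cont_maps X u Y v" using gZ h_def by blast
  have gY: "g ` (Z \<times> X) \<subseteq> Y"
  proof clarify
    fix a x assume "a \<in> Z" "x \<in> X"
    then show "g (a, x) \<in> Y" using hin[of a] gstar_apply[of x X g a]
      unfolding h_def cont_maps_def cl_cont_def by auto
  qed
  show "cl_cont (Z \<times> X) (prod_cl Z w X u) Y v g"
    unfolding cl_cont_def
  proof (intro conjI allI impI)
    show "g ` (Z \<times> X) \<subseteq> Y" by (rule gY)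
    fix B assume B: "B \<subseteq> Z \<times> X"
    have gB: "g ` B \<subseteq> Y" using B gY by blast
    show "g ` prod_cl Z w X u B \<subseteq> v (g ` B)"
    proof clarify
      fix z x assume zx: "(z, x) \<in> prod_cl Z w X u B"
      then have zZ: "z \<in> Z" and xX: "x \<in> X"
        and nb: "\<And>W U. cl_nbhd Z w z W \<Longrightarrow> cl_nbhd X u x U \<Longrightarrow> W \<times> U \<inter> B \<noteq> {}"
        unfolding prod_cl_iff by auto
      define A where "A = fst ` B"
      have AZ: "A \<subseteq> Z" using B unfolding A_def by force
      define Tp where "Tp = ttop Z w z A h"
      have tsT: "topspace Tp = tsp Z w z A h" unfolding Tp_def using topspace_ttop[OF cZ zZ] .
      define g' where "g' = (\<lambda>(p, x). case p of None \<Rightarrow> g (z, x) | Some f \<Rightarrow> f x)"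
      have gsN: "gstar X g' None = h z" unfolding gstar_def g'_def h_def by simp
      have gsS: "\<And>a. a \<in> A \<Longrightarrow> gstar X g' (Some (h a)) = h a"
        using hin AZ unfolding gstar_def g'_def cont_maps_def
        by (simp add: ext_restrict subset_iff)
      have img: "gstar X g' ` topspace Tp \<subseteq> cont_maps X u Y v"
        unfolding tsT tsp_def using gsN gsS hin zZ AZ by auto
      have cstar: "cl_cont (topspace Tp) ((closure_of) Tp) (cont_maps X u Y v) \<sigma> (gstar X g')"
        unfolding cl_cont_def
      proof (intro conjI allI impI)
        show "gstar X g' ` topspace Tp \<subseteq> cont_maps X u Y v" by (rule img)
        fix S assume ST: "S \<subseteq> topspace Tp"
        have imS: "gstar X g' ` S \<subseteq> cont_maps X u Y v" using img ST by blast
        show "gstar X g' ` (Tp closure_of S) \<subseteq> \<sigma> (gstar X g' ` S)"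
        proof
          fix F assume "F \<in> gstar X g' ` (Tp closure_of S)"
          then obtain p where p: "p \<in> Tp closure_of S" "F = gstar X g' p" by blast
          show "F \<in> \<sigma> (gstar X g' ` S)"
          proof (cases "p \<in> S")
            case True
            then show ?thesis using p cech_ext[OF cS imS] by blast
          next
            case False
            have pT: "p \<in> topspace Tp" by (rule subsetD[OF closure_of_subset_topspace p(1)])
            have pN: "p = None"
            proof (rule ccontr)
              assume "p \<noteq> None"
              then obtain f where f: "p = Some f" by blast
              have "openin Tp {Some f}" unfolding Tp_def using open_Some[OF cZ] pT tsT f by simp
              then show False using p(1) False f unfolding in_closure_of by blast
            qed
            define A' where "A' = {a \<in> A. Some (h a) \<in> S}"
            have A'Z: "A' \<subseteq> Z" using AZ unfolding A'_def by blast
            have "z \<in> w A'"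
            proof (rule ccontr)
              assume "z \<notin> w A'"
              then have W: "cl_nbhd Z w z (Z - A')" using nbhd_compl[OF A'Z zZ] by blast
              have "openin Tp (insert None (Some ` h ` (A \<inter> (Z - A'))))" unfolding Tp_def using open_None[OF cZ W] .
              then obtain y where "y \<in> S" "y \<in> insert None (Some ` h ` (A \<inter> (Z - A')))"
                using p(1) pN unfolding in_closure_of by blast
              then show False using False pN unfolding A'_def by blast
            qed
            then have hz: "h z \<in> \<sigma> (h ` A')" using gc A'Z unfolding cl_cont_def h_def by blast
            have hsub: "h ` A' \<subseteq> gstar X g' ` S"
            proof
              fix y assume "y \<in> h ` A'"
              then obtain a where "a \<in> A'" "y = h a" by blast
              then show "y \<in> gstar X g' ` S" using gsS[of a] unfolding A'_def by force
            qed
            have m: "\<sigma> (h ` A') \<subseteq> \<sigma> (gstar X g' ` S)" by (rule cech_mono[OF cS hsub imS])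
            have "F = h z" using p(2) pN gsN by simp
            then show ?thesis using subsetD[OF m hz] by simp
          qed
        qed
      qed
      have nonTp: "at_most_one_nonisolated Tp" unfolding Tp_def by (rule nonisol[OF cZ zZ])
      have cont': "cl_cont (topspace Tp \<times> X) (prod_cl (topspace Tp) ((closure_of) Tp) X u) Y v g'"
        by (rule AT[unfolded admissible_test_def, rule_format, OF nonTp img cstar])
      define B'' where "B'' = {(Some (h a), x') |a x'. (a, x') \<in> B}"
      have B''sub: "B'' \<subseteq> topspace Tp \<times> X" unfolding B''_def tsT tsp_def A_def using B by force
      have "(None, x) \<in> prod_cl (topspace Tp) ((closure_of) Tp) X u B''"
        unfolding prod_cl_iff
      proof (intro conjI allI impI)
        show "None \<in> topspace Tp" unfolding tsT tsp_def by blast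
        show "x \<in> X" by (rule xX)
        fix N U assume N: "cl_nbhd (topspace Tp) ((closure_of) Tp) None N" and U: "cl_nbhd X u x U"
        then obtain V where V: "openin Tp V" "None \<in> V" "V \<subseteq> N" unfolding top_nbhd by blast
        then obtain W where W: "cl_nbhd Z w z W" "Some ` h ` (A \<inter> W) \<subseteq> V"
          unfolding Tp_def openin_ttop[OF cZ] topen_def by blast
        from nb[OF W(1) U] obtain a x' where ax: "a \<in> W" "x' \<in> U" "(a, x') \<in> B" by blast
        then have "a \<in> A" unfolding A_def by force
        then have "(Some (h a), x') \<in> N \<times> U \<inter> B''" using ax W V unfolding B''_def by blast
        then show "N \<times> U \<inter> B'' \<noteq> {}" by blast
      qed
      then have "g' (None, x) \<in> v (g' ` B'')" using cont' B''sub unfolding cl_cont_def by blast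
      moreover have "g' ` B'' = g ` B"
      proof -
        have "\<And>a x'. (a, x') \<in> B \<Longrightarrow> g' (Some (h a), x') = g (a, x')"
          using B unfolding g'_def h_def by (auto simp: gstar_apply)
        then show ?thesis unfolding B''_def by force
      qed
      ultimately show "g (z, x) \<in> v (g ` B)" unfolding g'_def by simp
    qed
  qed
qed

theorem corollary3:
  fixes X :: "'x set" and u :: "'x set \<Rightarrow> 'x set"
    and Y :: "'y set" and v :: "'y set \<Rightarrow> 'y set"
    and \<sigma> :: "('x \<Rightarrow> 'y) set \<Rightarrow> ('x \<Rightarrow> 'y) set"
  assumes "cech_closure X u" and "cech_closure Y v"
    and "cech_closure (cont_maps X u Y v) \<sigma>"
  shows "((proper TYPE('z) X u Y v \<sigma> \<longrightarrow> proper_test TYPE('z) X u Y v \<sigma>) \<and>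
         (proper_test TYPE(('x \<Rightarrow> 'y) option) X u Y v \<sigma> \<longrightarrow> proper TYPE('z) X u Y v \<sigma>)) \<and>
         ((admissible TYPE('z) X u Y v \<sigma> \<longrightarrow> admissible_test TYPE('z) X u Y v \<sigma>) \<and>
         (admissible_test TYPE(('x \<Rightarrow> 'y) option) X u Y v \<sigma> \<longrightarrow> admissible TYPE('z) X u Y v \<sigma>))"
proof (intro conjI impI)
  assume P: "proper TYPE('z) X u Y v \<sigma>"
  show "proper_test TYPE('z) X u Y v \<sigma>" unfolding proper_test_def
  proof (intro allI impI)
    fix Z :: "'z topology" and g :: "'z \<times> 'x \<Rightarrow> 'y"
    assume "cl_cont (topspace Z \<times> X) (prod_cl (topspace Z) ((closure_of) Z) X u) Y v g"
    then show "cl_cont (topspace Z) ((closure_of) Z) (cont_maps X u Y v) \<sigma> (gstar X g)"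
      by (rule P[unfolded proper_def, rule_format, OF cech_top])
  qed
next
  assume P: "admissible TYPE('z) X u Y v \<sigma>"
  show "admissible_test TYPE('z) X u Y v \<sigma>" unfolding admissible_test_def
  proof (intro allI impI)
    fix Z :: "'z topology" and g :: "'z \<times> 'x \<Rightarrow> 'y"
    assume "gstar X g ` topspace Z \<subseteq> cont_maps X u Y v"
      "cl_cont (topspace Z) ((closure_of) Z) (cont_maps X u Y v) \<sigma> (gstar X g)"
    then show "cl_cont (topspace Z \<times> X) (prod_cl (topspace Z) ((closure_of) Z) X u) Y v g"
      by (rule P[unfolded admissible_def, rule_format, OF cech_top])
  qed
next
  show "proper_test TYPE(('x \<Rightarrow> 'y) option) X u Y v \<sigma> \<Longrightarrow> proper TYPE('z) X u Y v \<sigma>"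
    by (rule proper_dir[OF assms])
next
  show "admissible_test TYPE(('x \<Rightarrow> 'y) option) X u Y v \<sigma> \<Longrightarrow> admissible TYPE('z) X u Y v \<sigma>"
    by (rule adm_dir[OF assms])
qed

end
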